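(* Let $G$ be a connected simple graph in which every vertex has odd degree, and let $m=|E(G)|$. Let $f_G$ and $\tilde f_G$ be the formulas defined below. If $m$ is even, then $f_G$ is satisfiable and $\tilde f_G$ is unsatisfiable; if $m$ is odd, then $f_G$ is unsatisfiable and $\tilde f_G$ is satisfiable.
   Context: Construction of $f_G$: for each edge $e=\{v,w\}$ of $G$ introduce two variables and literals $a^{v,w},b^{v,w}$ (literals on $v$'s side) with $a^{w,v}=\neg a^{v,w}$ and $b^{w,v}=\neg b^{v,w}$ (literals on $w$'s side). For each vertex $v$ with incident edges $\{v,w_1\},\dots,\{v,w_k\}$ ($k=d(v)$), write $a_i=a^{v,w_i}$, $b_i=b^{v,w_i}$ and add the clauses $(\bigvee_{i\in S}a_i)\vee(\bigvee_{i\in[k]\setminus S}b_i)$ for every $S\subseteq[k]$ with $|S|$ even, together with the clauses $a_i\vee b_i$ for $1\le i\le k$. The formula $f_G$ is the conjunction of all these clauses over all vertices. The twisted formula $\tilde f_G$ is obtained in the same way, except that for one arbitrarily chosen edge $\{v_0,w_0\}$ the negation pairing is twisted: $a^{v_0,w_0}=\neg b^{w_0,v_0}$ and $b^{v_0,w_0}=\neg a^{w_0,v_0}$ (all other edges as before). *)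

theory Defs
  imports Main
begin

definition simple_graph :: "'a set \<Rightarrow> ('a \<Rightarrow> 'a \<Rightarrow> bool) \<Rightarrow> bool" where
  "simple_graph V E \<longleftrightarrow> finite V \<and> (\<forall>v w. E v w \<longrightarrow> v \<in> V \<and> w \<in> V \<and> E w v \<and> v \<noteq> w)"

definition connected_graph :: "'a set \<Rightarrow> ('a \<Rightarrow> 'a \<Rightarrow> bool) \<Rightarrow> bool" where
  "connected_graph V E \<longleftrightarrow> V \<noteq> {} \<and> (\<forall>u\<in>V. \<forall>w\<in>V. E\<^sup>*\<^sup>* u w)"

definition nbrs :: "'a set \<Rightarrow> ('a \<Rightarrow> 'a \<Rightarrow> bool) \<Rightarrow> 'a \<Rightarrow> 'a set" where
  "nbrs V E v = {w \<in> V. E v w}"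

definition degree :: "'a set \<Rightarrow> ('a \<Rightarrow> 'a \<Rightarrow> bool) \<Rightarrow> 'a \<Rightarrow> nat" where
  "degree V E v = card (nbrs V E v)"

definition edges :: "'a set \<Rightarrow> ('a \<Rightarrow> 'a \<Rightarrow> bool) \<Rightarrow> 'a set set" where
  "edges V E = {{v, w} | v w. v \<in> V \<and> w \<in> V \<and> E v w}"

datatype 'v lit = Pos 'v | Neg 'v

fun lit_val :: "('v \<Rightarrow> bool) \<Rightarrow> 'v lit \<Rightarrow> bool" where
  "lit_val \<sigma> (Pos x) = \<sigma> x"
| "lit_val \<sigma> (Neg x) = (\<not> \<sigma> x)"

definition satisfiable :: "'v lit set set \<Rightarrow> bool" where
  "satisfiable F \<longleftrightarrow> (\<exists>\<sigma>. \<forall>C\<in>F. \<exists>l\<in>C. lit_val \<sigma> l)"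

text \<open>Variables: for the edge {v,w} oriented as (v,w) (ori v w), the two variables are
  (v,w,True) (the "a" variable) and (v,w,False) (the "b" variable).
  Literal a^{v,w} is the positive variable on the owning side and its negation on the other side.\<close>

definition orientation :: "('a \<Rightarrow> 'a \<Rightarrow> bool) \<Rightarrow> ('a \<Rightarrow> 'a \<Rightarrow> bool) \<Rightarrow> bool" where
  "orientation E ori \<longleftrightarrow> (\<forall>v w. E v w \<longrightarrow> (ori v w \<longleftrightarrow> \<not> ori w v))"

definition alit :: "('a \<Rightarrow> 'a \<Rightarrow> bool) \<Rightarrow> 'a \<Rightarrow> 'a \<Rightarrow> ('a \<times> 'a \<times> bool) lit" where
  "alit ori v w = (if ori v w then Pos (v, w, True) else Neg (w, v, True))"

definition blit :: "('a \<Rightarrow> 'a \<Rightarrow> bool) \<Rightarrow> 'a \<Rightarrow> 'a \<Rightarrow> ('a \<times> 'a \<times> bool) lit" where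
  "blit ori v w = (if ori v w then Pos (v, w, False) else Neg (w, v, False))"

text \<open>Twisted literals at edge {v0,w0}: a^{v,w} = \<not> b^{w,v}, b^{v,w} = \<not> a^{w,v}.\<close>

definition talit :: "('a \<Rightarrow> 'a \<Rightarrow> bool) \<Rightarrow> 'a \<Rightarrow> 'a \<Rightarrow> 'a \<Rightarrow> 'a \<Rightarrow> ('a \<times> 'a \<times> bool) lit" where
  "talit ori v0 w0 v w = (if {v, w} = {v0, w0}
      then (if ori v w then Pos (v, w, True) else Neg (w, v, False))
      else alit ori v w)"

definition tblit :: "('a \<Rightarrow> 'a \<Rightarrow> bool) \<Rightarrow> 'a \<Rightarrow> 'a \<Rightarrow> 'a \<Rightarrow> 'a \<Rightarrow> ('a \<times> 'a \<times> bool) lit" where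
  "tblit ori v0 w0 v w = (if {v, w} = {v0, w0}
      then (if ori v w then Pos (v, w, False) else Neg (w, v, True))
      else blit ori v w)"

text \<open>The clauses of the formula, given the literal maps la v w = a^{v,w}, lb v w = b^{v,w}.
  Incident edges of v are indexed by its neighbours (equivalent to indexing by [k] in a simple graph).\<close>

definition vertex_clauses :: "'a set \<Rightarrow> ('a \<Rightarrow> 'a \<Rightarrow> bool) \<Rightarrow> ('a \<Rightarrow> 'a \<Rightarrow> 'l) \<Rightarrow> ('a \<Rightarrow> 'a \<Rightarrow> 'l)
    \<Rightarrow> 'a \<Rightarrow> 'l set set" where
  "vertex_clauses V E la lb v =
     {la v ` S \<union> lb v ` (nbrs V E v - S) | S. S \<subseteq> nbrs V E v \<and> even (card S)}
     \<union> {{la v w, lb v w} | w. w \<in> nbrs V E v}"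

definition graph_formula :: "'a set \<Rightarrow> ('a \<Rightarrow> 'a \<Rightarrow> bool) \<Rightarrow> ('a \<Rightarrow> 'a \<Rightarrow> 'l) \<Rightarrow> ('a \<Rightarrow> 'a \<Rightarrow> 'l)
    \<Rightarrow> 'l set set" where
  "graph_formula V E la lb = (\<Union>v\<in>V. vertex_clauses V E la lb v)"

definition f_G :: "'a set \<Rightarrow> ('a \<Rightarrow> 'a \<Rightarrow> bool) \<Rightarrow> ('a \<Rightarrow> 'a \<Rightarrow> bool) \<Rightarrow> ('a \<times> 'a \<times> bool) lit set set" where
  "f_G V E ori = graph_formula V E (alit ori) (blit ori)"

definition twisted_f_G :: "'a set \<Rightarrow> ('a \<Rightarrow> 'a \<Rightarrow> bool) \<Rightarrow> ('a \<Rightarrow> 'a \<Rightarrow> bool) \<Rightarrow> 'a \<Rightarrow> 'a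
    \<Rightarrow> ('a \<times> 'a \<times> bool) lit set set" where
  "twisted_f_G V E ori v0 w0 = graph_formula V E (talit ori v0 w0) (tblit ori v0 w0)"

end

theory Submission
  imports Defs
begin

lemma xor_card:
  assumes "finite N"
  shows "odd (card {w\<in>N. P w \<noteq> Q w}) \<longleftrightarrow> (odd (card {w\<in>N. P w}) \<noteq> odd (card {w\<in>N. Q w}))"
  using assms
proof (induction N rule: finite_induct)
  case empty then show ?case by simp
next
  case (insert x N)
  have e: "\<And>R. {w\<in>insert x N. R w} = (if R x then insert x {w\<in>N. R w} else {w\<in>N. R w})"
    by auto
  have c: "\<And>R. card {w\<in>insert x N. R w} = (if R x then Suc (card {w\<in>N. R w}) else card {w\<in>N. R w})"
    by (subst e) (use insert in auto)
  show ?case using insert.IH by (simp only: c) auto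
qed

lemma sum_parity:
  assumes "finite V"
  shows "even (\<Sum>v\<in>V. (f v::nat)) \<longleftrightarrow> even (card {v\<in>V. odd (f v)})"
  using assms
proof (induction V rule: finite_induct)
  case empty then show ?case by simp
next
  case (insert x V)
  have e: "{v\<in>insert x V. odd (f v)} = (if odd (f x) then insert x {v\<in>V. odd (f v)} else {v\<in>V. odd (f v)})"
    by auto
  show ?case unfolding e using insert by auto
qed

definition degF :: "'a set \<Rightarrow> ('a \<Rightarrow> 'a \<Rightarrow> bool) \<Rightarrow> ('a \<Rightarrow> 'a \<Rightarrow> bool) \<Rightarrow> 'a \<Rightarrow> nat" where
  "degF V E F v = card {w\<in>nbrs V E v. F v w}"

lemma finite_nbrs: "simple_graph V E \<Longrightarrow> finite (nbrs V E v)"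
  unfolding simple_graph_def nbrs_def by auto

lemma degF_xor:
  assumes "simple_graph V E"
  shows "odd (degF V E (\<lambda>x y. F x y \<noteq> G x y) v) \<longleftrightarrow> (odd (degF V E F v) \<noteq> odd (degF V E G v))"
  unfolding degF_def using xor_card[OF finite_nbrs[OF assms]] by simp

lemma path_join:
  assumes "simple_graph V E" and "E\<^sup>*\<^sup>* s t"
  shows "\<exists>F. (\<forall>x y. F x y = F y x) \<and> (\<forall>v\<in>V. odd (degF V E F v) \<longleftrightarrow> ((v = s) \<noteq> (v = t)))"
  using assms(2)
proof (induction rule: rtranclp_induct)
  case base
  show ?case by (rule exI[of _ "\<lambda>_ _. False"]) (simp add: degF_def)
next
  case (step u t)
  then obtain F' where F': "\<forall>x y. F' x y = F' y x"
    "\<forall>v\<in>V. odd (degF V E F' v) \<longleftrightarrow> ((v = s) \<noteq> (v = u))" by blast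
  define Fe where "Fe = (\<lambda>x y. (x = u \<and> y = t) \<or> (x = t \<and> y = u))"
  have ut: "u \<noteq> t" "u \<in> V" "t \<in> V" "E t u" using step(2) assms(1) unfolding simple_graph_def by auto
  have de: "odd (degF V E Fe v) \<longleftrightarrow> ((v = u) \<noteq> (v = t))" for v
  proof -
    have "{w\<in>nbrs V E v. Fe v w} = (if v = u then {t} else if v = t then {u} else {})"
      using ut step(2) unfolding Fe_def nbrs_def by auto
    then show ?thesis using ut unfolding degF_def by auto
  qed
  show ?case
  proof (rule exI[of _ "\<lambda>x y. F' x y \<noteq> Fe x y"], intro conjI ballI allI)
    show "(F' x y \<noteq> Fe x y) = (F' y x \<noteq> Fe y x)" for x y using F'(1) unfolding Fe_def by auto
    fix v assume "v \<in> V"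
    have a: "odd (degF V E F' v) = ((v = s) \<noteq> (v = u))" using F'(2) \<open>v\<in>V\<close> by blast
    show "odd (degF V E (\<lambda>x y. F' x y \<noteq> Fe x y) v) = ((v = s) \<noteq> (v = t))"
      using degF_xor[OF assms(1), of F' Fe v] a de[of v] by argo
  qed
qed

lemma t_join:
  assumes "simple_graph V E" and "connected_graph V E"
  shows "T \<subseteq> V \<Longrightarrow> card T = 2 * n \<Longrightarrow> \<exists>F. (\<forall>x y. F x y = F y x) \<and> (\<forall>v\<in>V. odd (degF V E F v) \<longleftrightarrow> v \<in> T)"
proof (induction n arbitrary: T)
  case 0
  have "finite V" using assms(1) unfolding simple_graph_def by simp
  then have "finite T" using 0 finite_subset by metis
  then have "T = {}" using 0 by simp
  then show ?case by (intro exI[of _ "\<lambda>_ _. False"]) (simp add: degF_def)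
next
  case (Suc n)
  have "finite V" using assms(1) unfolding simple_graph_def by simp
  then have fin: "finite T" using Suc.prems(1) finite_subset by metis
  have "T \<noteq> {}" using Suc.prems(2) by auto
  then obtain s where s: "s \<in> T" by blast
  have "T - {s} \<noteq> {}"
  proof
    assume "T - {s} = {}"
    then have "T = {s}" using s by blast
    then show False using Suc.prems(2) by simp
  qed
  then obtain t where t: "t \<in> T - {s}" by blast
  have "card (T - {s,t}) = card T - card {s,t}" using s t fin by (intro card_Diff_subset) auto
  then have cT: "card (T - {s, t}) = 2 * n" using Suc.prems s t by auto
  have sub: "T - {s, t} \<subseteq> V" using Suc.prems(1) by auto
  from Suc.IH[OF sub cT] obtain F' where F': "\<forall>x y. F' x y = F' y x" "\<forall>v\<in>V. odd (degF V E F' v) \<longleftrightarrow> v \<in> T - {s, t}"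
    by blast
  have "s \<in> V" "t \<in> V" using Suc.prems(1) s t by auto
  then have "E\<^sup>*\<^sup>* s t" using assms(2) unfolding connected_graph_def by simp
  from path_join[OF assms(1) this] obtain Fp where Fp: "\<forall>x y. Fp x y = Fp y x" "\<forall>v\<in>V. odd (degF V E Fp v) \<longleftrightarrow> ((v = s) \<noteq> (v = t))"
    by blast
  show ?case
  proof (rule exI[of _ "\<lambda>x y. F' x y \<noteq> Fp x y"], intro conjI ballI allI)
    show "(F' x y \<noteq> Fp x y) = (F' y x \<noteq> Fp y x)" for x y using F'(1) Fp(1) by auto
    fix v assume "v \<in> V"
    have a: "odd (degF V E F' v) = (v \<in> T - {s, t})" using F'(2) \<open>v\<in>V\<close> by blast
    have b: "odd (degF V E Fp v) = ((v = s) \<noteq> (v = t))" using Fp(2) \<open>v\<in>V\<close> by blast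
    have c: "(v \<in> T) = ((v \<in> T - {s, t}) \<noteq> ((v = s) \<noteq> (v = t)))" using s t by auto
    show "odd (degF V E (\<lambda>x y. F' x y \<noteq> Fp x y) v) = (v \<in> T)"
      using degF_xor[OF assms(1), of F' Fp v] a b c by argo
  qed
qed


lemma vertex_sound:
  assumes "\<forall>C\<in>vertex_clauses V E la lb v. \<exists>l\<in>C. lit_val \<sigma> l"
    and "finite (nbrs V E v)"
    and "\<forall>w\<in>nbrs V E v. \<not> (lit_val \<sigma> (la v w) \<and> lit_val \<sigma> (lb v w))"
  shows "odd (card {w\<in>nbrs V E v. \<not> lit_val \<sigma> (la v w)})"
proof (rule ccontr)
  define S where "S = {w\<in>nbrs V E v. \<not> lit_val \<sigma> (la v w)}"
  assume "\<not> odd (card {w\<in>nbrs V E v. \<not> lit_val \<sigma> (la v w)})"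
  then have "even (card S)" unfolding S_def by simp
  moreover have "S \<subseteq> nbrs V E v" unfolding S_def by auto
  ultimately have "la v ` S \<union> lb v ` (nbrs V E v - S) \<in> vertex_clauses V E la lb v"
    unfolding vertex_clauses_def by blast
  then obtain l where "l \<in> la v ` S \<union> lb v ` (nbrs V E v - S)" "lit_val \<sigma> l" using assms(1) by blast
  then show False using assms(3) unfolding S_def by auto
qed

lemma vertex_pair:
  assumes "\<forall>C\<in>vertex_clauses V E la lb v. \<exists>l\<in>C. lit_val \<sigma> l" and "w \<in> nbrs V E v"
  shows "lit_val \<sigma> (la v w) \<or> lit_val \<sigma> (lb v w)"
proof -
  have "{la v w, lb v w} \<in> vertex_clauses V E la lb v" using assms(2) unfolding vertex_clauses_def by blast
  then show ?thesis using assms(1) by fastforce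
qed

lemma vertex_complete:
  assumes "\<forall>w\<in>nbrs V E v. lit_val \<sigma> (la v w) \<noteq> lit_val \<sigma> (lb v w)"
    and "odd (card {w\<in>nbrs V E v. \<not> lit_val \<sigma> (la v w)})"
  shows "\<forall>C\<in>vertex_clauses V E la lb v. \<exists>l\<in>C. lit_val \<sigma> l"
proof
  fix C assume "C \<in> vertex_clauses V E la lb v"
  then consider (a) S where "C = la v ` S \<union> lb v ` (nbrs V E v - S)" "S \<subseteq> nbrs V E v" "even (card S)"
    | (b) w where "C = {la v w, lb v w}" "w \<in> nbrs V E v"
    unfolding vertex_clauses_def by blast
  then show "\<exists>l\<in>C. lit_val \<sigma> l"
  proof cases
    case a
    show ?thesis
    proof (rule ccontr)
      assume "\<not> (\<exists>l\<in>C. lit_val \<sigma> l)"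
      then have h1: "\<forall>w\<in>S. \<not> lit_val \<sigma> (la v w)" and h2: "\<forall>w\<in>nbrs V E v - S. \<not> lit_val \<sigma> (lb v w)"
        using a(1) by auto
      have "S = {w\<in>nbrs V E v. \<not> lit_val \<sigma> (la v w)}" using h1 h2 a(2) assms(1) by blast
      then show False using a(3) assms(2) by simp
    qed
  next
    case b then show ?thesis using assms(1) by auto
  qed
qed

lemma finite_D: "simple_graph V E \<Longrightarrow> finite {p. E (fst p) (snd p)}"
proof -
  assume a: "simple_graph V E"
  have "{p. E (fst p) (snd p)} \<subseteq> V \<times> V" using a unfolding simple_graph_def by auto
  moreover have "finite (V \<times> V)" using a unfolding simple_graph_def by simp
  ultimately show ?thesis by (rule finite_subset)
qed

lemma sum_D:
  assumes "simple_graph V E" and "orientation E ori"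
  shows "(\<Sum>p\<in>{p. E (fst p) (snd p)}. h p)
       = (\<Sum>p\<in>{p. E (fst p) (snd p) \<and> ori (fst p) (snd p)}. h p + h (prod.swap p))"
proof -
  let ?D = "{p. E (fst p) (snd p)}" and ?O = "{p. E (fst p) (snd p) \<and> ori (fst p) (snd p)}"
  have sym: "E v w \<Longrightarrow> E w v" for v w using assms(1) unfolding simple_graph_def by blast
  have or: "E v w \<Longrightarrow> ori v w \<longleftrightarrow> \<not> ori w v" for v w using assms(2) unfolding orientation_def by blast
  have D: "?D = ?O \<union> prod.swap ` ?O"
  proof (rule set_eqI)
    fix p :: "'a \<times> 'a"
    obtain v w where p: "p = (v, w)" by (cases p)
    show "p \<in> ?D \<longleftrightarrow> p \<in> ?O \<union> prod.swap ` ?O"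
    proof
      assume "p \<in> ?D"
      then have vw: "E v w" unfolding p by simp
      show "p \<in> ?O \<union> prod.swap ` ?O"
      proof (cases "ori v w")
        case True then show ?thesis using vw unfolding p by simp
      next
        case False
        then have "ori w v" using or[OF vw] by blast
        then have "(w, v) \<in> ?O" using sym[OF vw] by simp
        then have "prod.swap (w, v) \<in> prod.swap ` ?O" by (rule imageI)
        then show ?thesis unfolding p by simp
      qed
    next
      assume "p \<in> ?O \<union> prod.swap ` ?O"
      then show "p \<in> ?D"
      proof
        assume "p \<in> ?O" then show ?thesis by simp
      next
        assume "p \<in> prod.swap ` ?O"
        then obtain q where q: "q \<in> ?O" "p = prod.swap q" by blast
        then have "E (snd p) (fst p)" by (cases q) simp
        then show ?thesis using sym by (cases p) simp
      qed
    qed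
  qed
  have fO: "finite ?O" using finite_D[OF assms(1)] by (rule finite_subset[rotated]) auto
  have disj: "?O \<inter> prod.swap ` ?O = {}"
  proof (rule equals0I)
    fix p assume "p \<in> ?O \<inter> prod.swap ` ?O"
    then obtain q where q: "q \<in> ?O" "p = prod.swap q" "p \<in> ?O" by blast
    then have "E (fst q) (snd q)" "ori (fst q) (snd q)" "ori (snd q) (fst q)" by (cases q, simp)+
    then show False using or by blast
  qed
  have inj: "inj_on prod.swap ?O" by (auto simp: inj_on_def)
  have "(\<Sum>p\<in>?D. h p) = (\<Sum>p\<in>?O. h p) + (\<Sum>p\<in>prod.swap ` ?O. h p)"
    unfolding D using fO disj by (intro sum.union_disjoint) auto
  also have "(\<Sum>p\<in>prod.swap ` ?O. h p) = (\<Sum>p\<in>?O. h (prod.swap p))"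
    using sum.reindex[OF inj] by simp
  finally show ?thesis by (simp add: sum.distrib)
qed

lemma sum_nbrs:
  assumes "simple_graph V E"
  shows "(\<Sum>v\<in>V. card {w\<in>nbrs V E v. g v w}) = (\<Sum>p\<in>{p. E (fst p) (snd p)}. if g (fst p) (snd p) then 1 else 0)"
proof -
  have fV: "finite V" using assms unfolding simple_graph_def by simp
  have "(\<Sum>v\<in>V. card {w\<in>nbrs V E v. g v w}) = (\<Sum>v\<in>V. \<Sum>w\<in>nbrs V E v. if g v w then 1 else 0)"
  proof (rule sum.cong[OF refl])
    fix v assume "v \<in> V"
    have "card {w\<in>nbrs V E v. g v w} = (\<Sum>w\<in>{w\<in>nbrs V E v. g v w}. 1)" by simp
    also have "\<dots> = (\<Sum>w\<in>nbrs V E v. if g v w then 1 else 0)"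
      using finite_nbrs[OF assms] by (rule sum.inter_filter)
    finally show "card {w\<in>nbrs V E v. g v w} = (\<Sum>w\<in>nbrs V E v. if g v w then 1 else 0)" .
  qed
  also have "\<dots> = (\<Sum>p\<in>Sigma V (nbrs V E). if g (fst p) (snd p) then 1 else 0)"
    using sum.Sigma[OF fV, of "nbrs V E" "\<lambda>v w. if g v w then 1 else 0"] finite_nbrs[OF assms]
    by (simp add: case_prod_beta')
  also have "Sigma V (nbrs V E) = {p. E (fst p) (snd p)}"
    using assms unfolding simple_graph_def nbrs_def by auto
  finally show ?thesis .
qed

lemma card_O:
  assumes "simple_graph V E" and "orientation E ori"
  shows "card {p. E (fst p) (snd p) \<and> ori (fst p) (snd p)} = card (edges V E)"
proof -
  let ?O = "{p. E (fst p) (snd p) \<and> ori (fst p) (snd p)}"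
  have sym: "E v w \<Longrightarrow> E w v" for v w using assms(1) unfolding simple_graph_def by blast
  have inV: "E v w \<Longrightarrow> v \<in> V \<and> w \<in> V" for v w using assms(1) unfolding simple_graph_def by blast
  have or: "E v w \<Longrightarrow> ori v w \<longleftrightarrow> \<not> ori w v" for v w using assms(2) unfolding orientation_def by blast
  have "bij_betw (\<lambda>p. {fst p, snd p}) ?O (edges V E)"
    unfolding bij_betw_def
  proof
    show "inj_on (\<lambda>p. {fst p, snd p}) ?O"
    proof (rule inj_onI)
      fix p q assume "p \<in> ?O" "q \<in> ?O" "{fst p, snd p} = {fst q, snd q}"
      then show "p = q"
      proof (cases p, cases q)
        fix a b c d assume pq: "p = (a, b)" "q = (c, d)"
        have "p \<in> ?O" "q \<in> ?O" "{fst p, snd p} = {fst q, snd q}" by fact+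
        then have h: "E a b" "ori a b" "ori c d" "{a, b} = {c, d}" unfolding pq by simp_all
        from h(4) have "(a = c \<and> b = d) \<or> (a = d \<and> b = c)" by (simp add: doubleton_eq_iff)
        then show "p = q" using h or[of a b] unfolding pq by blast
      qed
    qed
    show "(\<lambda>p. {fst p, snd p}) ` ?O = edges V E"
    proof
      show "(\<lambda>p. {fst p, snd p}) ` ?O \<subseteq> edges V E" unfolding edges_def using inV by fastforce
      show "edges V E \<subseteq> (\<lambda>p. {fst p, snd p}) ` ?O"
      proof
        fix e assume "e \<in> edges V E"
        then obtain v w where e: "e = {v, w}" "E v w" unfolding edges_def by blast
        show "e \<in> (\<lambda>p. {fst p, snd p}) ` ?O"
        proof (cases "ori v w")
          case True then show ?thesis using e by (intro image_eqI[of _ _ "(v, w)"]) auto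
        next
          case False then have "ori w v" using or[OF e(2)] by simp
          then show ?thesis using e sym by (intro image_eqI[of _ _ "(w, v)"]) auto
        qed
      qed
    qed
  qed
  then show ?thesis by (rule bij_betw_same_card)
qed


lemma count_lemma:
  assumes "simple_graph V E" and "orientation E ori" and "E v0 w0"
    and "\<forall>v w. E v w \<longrightarrow> {v, w} \<noteq> {v0, w0} \<longrightarrow> g v w \<noteq> g w v"
  shows "(\<Sum>v\<in>V. card {w\<in>nbrs V E v. g v w}) + 1
       = (if g v0 w0 then 1 else 0) + (if g w0 v0 then 1 else 0) + card (edges V E)"
proof -
  let ?O = "{p. E (fst p) (snd p) \<and> ori (fst p) (snd p)}"
  let ?t = "\<lambda>p. (if g (fst p) (snd p) then 1 else 0) + (if g (snd p) (fst p) then 1 else (0::nat))"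
  have or: "E v w \<Longrightarrow> ori v w \<longleftrightarrow> \<not> ori w v" for v w using assms(2) unfolding orientation_def by blast
  have sym: "E v w \<Longrightarrow> E w v" for v w using assms(1) unfolding simple_graph_def by blast
  have fO: "finite ?O" using finite_D[OF assms(1)] by (rule finite_subset[rotated]) auto
  define e0 where "e0 = (if ori v0 w0 then (v0, w0) else (w0, v0))"
  have e0O: "e0 \<in> ?O" using assms(3) sym[OF assms(3)] or[OF assms(3)] unfolding e0_def by auto
  have te0: "?t e0 = (if g v0 w0 then 1 else 0) + (if g w0 v0 then 1 else 0)"
    unfolding e0_def by auto
  have t1: "?t p = 1" if "p \<in> ?O - {e0}" for p
  proof -
    obtain a b where p: "p = (a, b)" by (cases p)
    have ab: "E a b" "ori a b" "(a, b) \<noteq> e0" using that unfolding p by auto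
    have "{a, b} \<noteq> {v0, w0}"
    proof
      assume "{a, b} = {v0, w0}"
      then have "(a = v0 \<and> b = w0) \<or> (a = w0 \<and> b = v0)" by (simp add: doubleton_eq_iff)
      then show False using ab or[OF assms(3)] unfolding e0_def by (auto split: if_splits)
    qed
    then have "g a b \<noteq> g b a" using assms(4) ab(1) by blast
    then show ?thesis unfolding p by auto
  qed
  have "(\<Sum>v\<in>V. card {w\<in>nbrs V E v. g v w}) = (\<Sum>p\<in>?O. ?t p)"
    unfolding sum_nbrs[OF assms(1)] sum_D[OF assms(1,2)] by (simp add: case_prod_beta)
  also have "\<dots> = ?t e0 + (\<Sum>p\<in>?O - {e0}. ?t p)"
    using fO e0O by (rule sum.remove)
  also have "(\<Sum>p\<in>?O - {e0}. ?t p) = (\<Sum>p\<in>?O - {e0}. 1)"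
    using t1 by (rule sum.cong[OF refl])
  also have "\<dots> = card ?O - 1" using fO e0O by simp
  finally have "(\<Sum>v\<in>V. card {w\<in>nbrs V E v. g v w}) + 1 = ?t e0 + card ?O"
    using e0O fO card_gt_0_iff[of ?O] by fastforce
  then show ?thesis unfolding te0 card_O[OF assms(1,2)] .
qed

lemma handshake:
  assumes "simple_graph V E" and "orientation E ori" and "\<forall>v\<in>V. odd (degree V E v)"
  shows "even (card V)"
proof -
  have "(\<Sum>v\<in>V. card {w\<in>nbrs V E v. True}) = (\<Sum>p\<in>{p. E (fst p) (snd p) \<and> ori (fst p) (snd p)}. 2)"
    unfolding sum_nbrs[OF assms(1)] sum_D[OF assms(1,2)] by simp
  then have "even (\<Sum>v\<in>V. degree V E v)" unfolding degree_def by simp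
  moreover have "finite V" using assms(1) unfolding simple_graph_def by simp
  ultimately have "even (card {v\<in>V. odd (degree V E v)})" using sum_parity by blast
  moreover have "{v\<in>V. odd (degree V E v)} = V" using assms(3) by auto
  ultimately show ?thesis by simp
qed

lemma unsat_core:
  assumes "simple_graph V E"
    and sat: "\<forall>C\<in>graph_formula V E la lb. \<exists>l\<in>C. lit_val \<sigma> l"
    and H: "\<forall>v w. E v w \<longrightarrow> ((lit_val \<sigma> (la w v) \<or> lit_val \<sigma> (lb w v)) \<longleftrightarrow> \<not> (lit_val \<sigma> (la v w) \<and> lit_val \<sigma> (lb v w)))"
  shows "\<forall>v\<in>V. odd (card {w\<in>nbrs V E v. \<not> lit_val \<sigma> (la v w)})"
    and "\<forall>v w. E v w \<longrightarrow> lit_val \<sigma> (la v w) \<noteq> lit_val \<sigma> (lb v w)"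
proof -
  have inV: "E v w \<Longrightarrow> v \<in> V \<and> w \<in> V \<and> E w v" for v w using assms(1) unfolding simple_graph_def by blast
  have vc: "\<forall>C\<in>vertex_clauses V E la lb v. \<exists>l\<in>C. lit_val \<sigma> l" if "v \<in> V" for v
    using sat that unfolding graph_formula_def by blast
  have pair: "lit_val \<sigma> (la v w) \<or> lit_val \<sigma> (lb v w)" if "E v w" for v w
    using vertex_pair[OF vc, of v w] inV[OF that] that unfolding nbrs_def by blast
  have notboth: "\<not> (lit_val \<sigma> (la v w) \<and> lit_val \<sigma> (lb v w))" if "E v w" for v w
    using pair[of w v] inV[OF that] H that by blast
  show "\<forall>v w. E v w \<longrightarrow> lit_val \<sigma> (la v w) \<noteq> lit_val \<sigma> (lb v w)"
    using pair notboth by blast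
  show "\<forall>v\<in>V. odd (card {w\<in>nbrs V E v. \<not> lit_val \<sigma> (la v w)})"
  proof
    fix v assume v: "v \<in> V"
    show "odd (card {w\<in>nbrs V E v. \<not> lit_val \<sigma> (la v w)})"
      by (rule vertex_sound[OF vc[OF v] finite_nbrs[OF assms(1)]]) (auto simp: nbrs_def dest: notboth)
  qed
qed

lemma card_split:
  assumes "finite V"
  shows "card {v\<in>V. P v} + card {v\<in>V. \<not> P v} = card V"
proof -
  have "{v\<in>V. P v} \<union> {v\<in>V. \<not> P v} = V" by auto
  moreover have "card ({v\<in>V. P v} \<union> {v\<in>V. \<not> P v}) = card {v\<in>V. P v} + card {v\<in>V. \<not> P v}"
    using assms by (intro card_Un_disjoint) auto
  ultimately show ?thesis by simp
qed

lemma sat_core: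
  assumes "simple_graph V E" and "connected_graph V E" and "even (card V)"
    and HF: "\<And>F v w. (\<forall>x y. F x y = F y x) \<Longrightarrow> E v w \<Longrightarrow>
         lit_val (\<sigma> F) (lb v w) = (\<not> lit_val (\<sigma> F) (la v w)) \<and>
         lit_val (\<sigma> F) (la v w) = (lit_val (\<sigma> (\<lambda>_ _. False)) (la v w) \<noteq> F v w)"
    and K0: "even (\<Sum>v\<in>V. card {w\<in>nbrs V E v. \<not> lit_val (\<sigma> (\<lambda>_ _. False)) (la v w)})"
  shows "satisfiable (graph_formula V E la lb)"
proof -
  define c0 where "c0 v = card {w\<in>nbrs V E v. \<not> lit_val (\<sigma> (\<lambda>_ _. False)) (la v w)}" for v
  define T where "T = {v\<in>V. even (c0 v)}"
  have fV: "finite V" using assms(1) unfolding simple_graph_def by simp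
  have "even (card {v\<in>V. odd (c0 v)})" using K0 sum_parity[OF fV, of c0] unfolding c0_def by simp
  moreover have "card {v\<in>V. odd (c0 v)} + card T = card V" unfolding T_def using card_split[OF fV, of "\<lambda>v. odd (c0 v)"] by simp
  ultimately have "even (card T)" using assms(3) by presburger
  then obtain n where n: "card T = 2 * n" by (metis evenE)
  have "T \<subseteq> V" unfolding T_def by auto
  from t_join[OF assms(1,2) this n] obtain F where F: "\<forall>x y. F x y = F y x"
    "\<forall>v\<in>V. odd (degF V E F v) \<longleftrightarrow> v \<in> T" by blast
  have vc: "\<forall>C\<in>vertex_clauses V E la lb v. \<exists>l\<in>C. lit_val (\<sigma> F) l" if v: "v \<in> V" for v
  proof (rule vertex_complete)
    show "\<forall>w\<in>nbrs V E v. lit_val (\<sigma> F) (la v w) \<noteq> lit_val (\<sigma> F) (lb v w)"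
      using HF[OF F(1)] unfolding nbrs_def by auto
    have "{w\<in>nbrs V E v. \<not> lit_val (\<sigma> F) (la v w)}
        = {w\<in>nbrs V E v. (\<not> lit_val (\<sigma> (\<lambda>_ _. False)) (la v w)) \<noteq> F v w}"
      using HF[OF F(1)] unfolding nbrs_def by auto
    moreover have "odd (card {w\<in>nbrs V E v. (\<not> lit_val (\<sigma> (\<lambda>_ _. False)) (la v w)) \<noteq> F v w})
        \<longleftrightarrow> (odd (c0 v) \<noteq> odd (degF V E F v))"
      unfolding c0_def degF_def by (rule xor_card[OF finite_nbrs[OF assms(1)]])
    moreover have "odd (degF V E F v) \<longleftrightarrow> even (c0 v)" using F(2) v unfolding T_def by auto
    ultimately show "odd (card {w\<in>nbrs V E v. \<not> lit_val (\<sigma> F) (la v w)})" by simp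
  qed
  show ?thesis unfolding satisfiable_def graph_formula_def
    using vc by blast
qed


definition sigF :: "('a \<Rightarrow> 'a \<Rightarrow> bool) \<Rightarrow> 'a \<times> 'a \<times> bool \<Rightarrow> bool" where
  "sigF F p = ((\<not> F (fst p) (fst (snd p))) = snd (snd p))"

lemma lv_alit: "lit_val (sigF F) (alit ori v w) = (if ori v w then \<not> F v w else F w v)"
  by (simp add: alit_def sigF_def)
lemma lv_blit: "lit_val (sigF F) (blit ori v w) = (if ori v w then F v w else \<not> F w v)"
  by (simp add: blit_def sigF_def)
lemma lv_talit: "lit_val (sigF F) (talit ori v0 w0 v w) =
   (if {v, w} = {v0, w0} then (if ori v w then \<not> F v w else \<not> F w v) else lit_val (sigF F) (alit ori v w))"
  by (simp add: talit_def sigF_def)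
lemma lv_tblit: "lit_val (sigF F) (tblit ori v0 w0 v w) =
   (if {v, w} = {v0, w0} then (if ori v w then F v w else F w v) else lit_val (sigF F) (blit ori v w))"
  by (simp add: tblit_def sigF_def)

lemma neg_alit:
  assumes "orientation E ori" "E v w"
  shows "lit_val \<sigma> (alit ori w v) = (\<not> lit_val \<sigma> (alit ori v w))"
    and "lit_val \<sigma> (blit ori w v) = (\<not> lit_val \<sigma> (blit ori v w))"
proof -
  have "ori v w \<longleftrightarrow> \<not> ori w v" using assms unfolding orientation_def by blast
  then show "lit_val \<sigma> (alit ori w v) = (\<not> lit_val \<sigma> (alit ori v w))"
    and "lit_val \<sigma> (blit ori w v) = (\<not> lit_val \<sigma> (blit ori v w))"
    unfolding alit_def blit_def by (cases "ori v w"; simp)+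
qed

lemma neg_talit:
  assumes "orientation E ori" "E v w"
  shows "lit_val \<sigma> (talit ori v0 w0 w v) = (if {v, w} = {v0, w0} then \<not> lit_val \<sigma> (tblit ori v0 w0 v w) else \<not> lit_val \<sigma> (talit ori v0 w0 v w))"
    and "lit_val \<sigma> (tblit ori v0 w0 w v) = (if {v, w} = {v0, w0} then \<not> lit_val \<sigma> (talit ori v0 w0 v w) else \<not> lit_val \<sigma> (tblit ori v0 w0 v w))"
proof -
  have o: "ori v w \<longleftrightarrow> \<not> ori w v" using assms unfolding orientation_def by blast
  have c: "{w, v} = {v, w}" by blast
  show "lit_val \<sigma> (talit ori v0 w0 w v) = (if {v, w} = {v0, w0} then \<not> lit_val \<sigma> (tblit ori v0 w0 v w) else \<not> lit_val \<sigma> (talit ori v0 w0 v w))"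
    using o unfolding talit_def tblit_def alit_def c by (cases "ori v w"; simp)
  show "lit_val \<sigma> (tblit ori v0 w0 w v) = (if {v, w} = {v0, w0} then \<not> lit_val \<sigma> (talit ori v0 w0 v w) else \<not> lit_val \<sigma> (tblit ori v0 w0 v w))"
    using o unfolding talit_def tblit_def blit_def c by (cases "ori v w"; simp)
qed

lemma talit_other: "{v, w} \<noteq> {v0, w0} \<Longrightarrow> talit ori v0 w0 v w = alit ori v w"
  by (simp add: talit_def)

theorem lemma6:
  fixes V :: "'a set" and E :: "'a \<Rightarrow> 'a \<Rightarrow> bool" and ori :: "'a \<Rightarrow> 'a \<Rightarrow> bool"
    and v0 w0 :: 'a
  assumes "simple_graph V E"
    and "connected_graph V E"
    and "\<forall>v\<in>V. odd (degree V E v)"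
    and "orientation E ori"
    and "E v0 w0"
  shows "(even (card (edges V E)) \<longrightarrow>
            satisfiable (f_G V E ori) \<and> \<not> satisfiable (twisted_f_G V E ori v0 w0))
       \<and> (odd (card (edges V E)) \<longrightarrow>
            \<not> satisfiable (f_G V E ori) \<and> satisfiable (twisted_f_G V E ori v0 w0))"
proof -
  have evV: "even (card V)" by (rule handshake[OF assms(1,4,3)])
  have fV: "finite V" using assms(1) unfolding simple_graph_def by simp
  have or: "E v w \<Longrightarrow> ori v w \<longleftrightarrow> \<not> ori w v" for v w using assms(4) unfolding orientation_def by blast
  have evK: "even (\<Sum>v\<in>V. c v)" if "\<forall>v\<in>V. odd (c v)" for c :: "'a \<Rightarrow> nat"
  proof -
    have "{v\<in>V. odd (c v)} = V" using that by auto
    then show ?thesis using sum_parity[OF fV, of c] evV by simp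
  qed
  have U1: "even (card (edges V E))" if sat: "satisfiable (f_G V E ori)"
  proof -
    obtain \<sigma> where s: "\<forall>C\<in>graph_formula V E (alit ori) (blit ori). \<exists>l\<in>C. lit_val \<sigma> l"
      using sat unfolding satisfiable_def f_G_def by blast
    have H: "\<forall>v w. E v w \<longrightarrow> ((lit_val \<sigma> (alit ori w v) \<or> lit_val \<sigma> (blit ori w v)) \<longleftrightarrow> \<not> (lit_val \<sigma> (alit ori v w) \<and> lit_val \<sigma> (blit ori v w)))"
      using neg_alit[OF assms(4)] by simp
    note uc = unsat_core[OF assms(1) s H]
    let ?g = "\<lambda>v w. \<not> lit_val \<sigma> (alit ori v w)"
    have "(\<Sum>v\<in>V. card {w\<in>nbrs V E v. ?g v w}) + 1
       = (if ?g v0 w0 then 1 else 0) + (if ?g w0 v0 then 1 else 0) + card (edges V E)"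
      by (rule count_lemma[OF assms(1,4,5)]) (simp add: neg_alit[OF assms(4)])
    moreover have "(if ?g v0 w0 then 1 else 0) + (if ?g w0 v0 then 1 else 0) = (1::nat)"
      using neg_alit[OF assms(4,5)] by simp
    moreover have "even (\<Sum>v\<in>V. card {w\<in>nbrs V E v. ?g v w})" by (rule evK[OF uc(1)])
    ultimately show ?thesis by simp
  qed
  have gen: "\<And>K m (b::bool) c. K + 1 = (if b then 1 else 0) + (if c then 1 else 0) + m \<Longrightarrow> c = b \<Longrightarrow> even K \<Longrightarrow> odd (m::nat)"
    by (simp split: if_splits; presburger)
  have U2: "odd (card (edges V E))" if sat: "satisfiable (twisted_f_G V E ori v0 w0)"
  proof -
    obtain \<sigma> where s: "\<forall>C\<in>graph_formula V E (talit ori v0 w0) (tblit ori v0 w0). \<exists>l\<in>C. lit_val \<sigma> l"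
      using sat unfolding satisfiable_def twisted_f_G_def by blast
    have H: "\<forall>v w. E v w \<longrightarrow> ((lit_val \<sigma> (talit ori v0 w0 w v) \<or> lit_val \<sigma> (tblit ori v0 w0 w v)) \<longleftrightarrow> \<not> (lit_val \<sigma> (talit ori v0 w0 v w) \<and> lit_val \<sigma> (tblit ori v0 w0 v w)))"
      using neg_talit[OF assms(4)] by (simp; blast)
    note uc = unsat_core[OF assms(1) s H]
    let ?g = "\<lambda>v w. \<not> lit_val \<sigma> (talit ori v0 w0 v w)"
    have "(\<Sum>v\<in>V. card {w\<in>nbrs V E v. ?g v w}) + 1
       = (if ?g v0 w0 then 1 else 0) + (if ?g w0 v0 then 1 else 0) + card (edges V E)"
      by (rule count_lemma[OF assms(1,4,5)]) (simp add: neg_talit[OF assms(4)])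
    moreover have "?g w0 v0 = ?g v0 w0"
      using neg_talit(1)[OF assms(4,5), of \<sigma> v0 w0] uc(2) assms(5) by auto
    moreover have "even (\<Sum>v\<in>V. card {w\<in>nbrs V E v. ?g v w})" by (rule evK[OF uc(1)])
    ultimately show ?thesis by (rule gen)
  qed
  have S1: "satisfiable (f_G V E ori)" if ev: "even (card (edges V E))"
    unfolding f_G_def
  proof (rule sat_core[OF assms(1,2) evV, where \<sigma> = sigF])
    fix F :: "'a \<Rightarrow> 'a \<Rightarrow> bool" and v w :: 'a
    assume F: "\<forall>x y. F x y = F y x" and e: "E v w"
    show "lit_val (sigF F) (blit ori v w) = (\<not> lit_val (sigF F) (alit ori v w)) \<and>
         lit_val (sigF F) (alit ori v w) = (lit_val (sigF (\<lambda>_ _. False)) (alit ori v w) \<noteq> F v w)"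
      unfolding lv_alit lv_blit using F by auto
  next
    let ?g = "\<lambda>v w. \<not> lit_val (sigF (\<lambda>_ _. False)) (alit ori v w)"
    have "(\<Sum>v\<in>V. card {w\<in>nbrs V E v. ?g v w}) + 1
       = (if ?g v0 w0 then 1 else 0) + (if ?g w0 v0 then 1 else 0) + card (edges V E)"
      by (rule count_lemma[OF assms(1,4,5)]) (simp add: neg_alit[OF assms(4)])
    moreover have "(if ?g v0 w0 then 1 else 0) + (if ?g w0 v0 then 1 else 0) = (1::nat)"
      using neg_alit[OF assms(4,5)] by simp
    ultimately show "even (\<Sum>v\<in>V. card {w\<in>nbrs V E v. ?g v w})" using ev by simp
  qed
  have S2: "satisfiable (twisted_f_G V E ori v0 w0)" if od: "odd (card (edges V E))"
    unfolding twisted_f_G_def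
  proof (rule sat_core[OF assms(1,2) evV, where \<sigma> = sigF])
    fix F :: "'a \<Rightarrow> 'a \<Rightarrow> bool" and v w :: 'a
    assume F: "\<forall>x y. F x y = F y x" and e: "E v w"
    show "lit_val (sigF F) (tblit ori v0 w0 v w) = (\<not> lit_val (sigF F) (talit ori v0 w0 v w)) \<and>
         lit_val (sigF F) (talit ori v0 w0 v w) = (lit_val (sigF (\<lambda>_ _. False)) (talit ori v0 w0 v w) \<noteq> F v w)"
      unfolding lv_talit lv_tblit lv_alit lv_blit using F by auto
  next
    let ?g = "\<lambda>v w. \<not> lit_val (sigF (\<lambda>_ _. False)) (talit ori v0 w0 v w)"
    have "(\<Sum>v\<in>V. card {w\<in>nbrs V E v. ?g v w}) + 1
       = (if ?g v0 w0 then 1 else 0) + (if ?g w0 v0 then 1 else 0) + card (edges V E)"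
      by (rule count_lemma[OF assms(1,4,5)]) (simp add: neg_talit[OF assms(4)])
    moreover have "\<not> ?g v0 w0" "\<not> ?g w0 v0" unfolding lv_talit by (auto simp: insert_commute)
    ultimately have "(\<Sum>v\<in>V. card {w\<in>nbrs V E v. ?g v w}) + 1 = card (edges V E)" by simp
    moreover have gen0: "\<And>K m::nat. K + 1 = m \<Longrightarrow> odd m \<Longrightarrow> even K" by presburger
    ultimately show "even (\<Sum>v\<in>V. card {w\<in>nbrs V E v. ?g v w})" using od by blast
  qed
  show ?thesis using U1 U2 S1 S2 by blast
qed

end
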